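(* Let $k\ge 2$ and let $G$ be a finite simple graph admitting a closed neighborhood balanced $k$-coloring $c$ with color classes $V_1,\dots,V_k$. If $|V_i|=|V_j|$ for some $i,j$, then $|E(V_i,V_i)|=|E(V_j,V_j)|$.
   Context: For a vertex $v$, $N[v]=\{v\}\cup\{u : uv\in E(G)\}$. A closed neighborhood balanced $k$-coloring of $G$ is a map $c: V(G)\to\{1,\dots,k\}$ such that for every vertex $v$ the numbers $|\{u\in N[v] : c(u)=i\}|$, $i=1,\dots,k$, are all equal; its color classes are $V_i=c^{-1}(i)$. $E(X,X)$ denotes the set of edges with both endpoints in $X$. *)

theory Defs
  imports Main
begin

definition simple_graph :: "'a set \<Rightarrow> 'a set set \<Rightarrow> bool" where
  "simple_graph V E \<longleftrightarrow> finite V \<and> (\<forall>e\<in>E. e \<subseteq> V \<and> card e = 2)"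

definition closed_nbhd :: "'a set \<Rightarrow> 'a set set \<Rightarrow> 'a \<Rightarrow> 'a set" where
  "closed_nbhd V E v = {v} \<union> {u \<in> V. {u, v} \<in> E}"

definition cnb_coloring :: "'a set \<Rightarrow> 'a set set \<Rightarrow> nat \<Rightarrow> ('a \<Rightarrow> nat) \<Rightarrow> bool" where
  "cnb_coloring V E k c \<longleftrightarrow>
     (\<forall>v\<in>V. c v \<in> {1..k}) \<and>
     (\<forall>v\<in>V. \<forall>i\<in>{1..k}. \<forall>j\<in>{1..k}.
        card {u \<in> closed_nbhd V E v. c u = i} = card {u \<in> closed_nbhd V E v. c u = j})"

definition color_class :: "'a set \<Rightarrow> ('a \<Rightarrow> nat) \<Rightarrow> nat \<Rightarrow> 'a set" where
  "color_class V c i = {v \<in> V. c v = i}"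

definition edges_within :: "'a set set \<Rightarrow> 'a set \<Rightarrow> 'a set set" where
  "edges_within E X = {e \<in> E. e \<subseteq> X}"

end

theory Submission
  imports Defs
begin

lemma card_filter_sum: "finite B \<Longrightarrow> card {u \<in> B. P u} = (\<Sum>u\<in>B. if P u then 1 else (0::nat))"
  by (simp add: sum.If_cases) (simp add: Int_def)

lemma cross_count:
  assumes "finite A" "finite B"
  shows "(\<Sum>v\<in>A. card {u \<in> B. {u, v} \<in> E}) = (\<Sum>u\<in>B. card {v \<in> A. {u, v} \<in> E})"
proof -
  have "(\<Sum>v\<in>A. card {u \<in> B. {u, v} \<in> E}) = (\<Sum>v\<in>A. \<Sum>u\<in>B. if {u, v} \<in> E then 1 else (0::nat))"
    using assms by (simp add: card_filter_sum)
  also have "\<dots> = (\<Sum>u\<in>B. \<Sum>v\<in>A. if {u, v} \<in> E then 1 else (0::nat))"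
    by (rule sum.swap)
  also have "\<dots> = (\<Sum>u\<in>B. card {v \<in> A. {u, v} \<in> E})"
    using assms by (simp add: card_filter_sum)
  finally show ?thesis .
qed

lemma handshake:
  assumes "finite V" "\<forall>e\<in>E. e \<subseteq> V \<and> card e = 2" "X \<subseteq> V"
  shows "(\<Sum>v\<in>X. card {u \<in> X. {u, v} \<in> E}) = 2 * card (edges_within E X)"
proof -
  let ?W = "edges_within E X"
  have fX: "finite X" using assms finite_subset by blast
  have fW: "finite ?W"
  proof -
    have "?W \<subseteq> Pow V" using assms unfolding edges_within_def by auto
    then show ?thesis using assms(1) finite_subset by blast
  qed
  have "2 * card ?W = (\<Sum>e\<in>?W. card e)"
    using assms(2) by (simp add: edges_within_def)
  also have "\<dots> = (\<Sum>e\<in>?W. \<Sum>v\<in>X. if v \<in> e then 1 else (0::nat))"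
  proof (rule sum.cong[OF refl])
    fix e assume "e \<in> ?W"
    then have "e \<subseteq> X" by (simp add: edges_within_def)
    then have "{v \<in> X. v \<in> e} = e" by auto
    then show "card e = (\<Sum>v\<in>X. if v \<in> e then 1 else (0::nat))"
      using card_filter_sum[OF fX, of "\<lambda>v. v \<in> e"] by simp
  qed
  also have "\<dots> = (\<Sum>v\<in>X. \<Sum>e\<in>?W. if v \<in> e then 1 else (0::nat))"
    by (rule sum.swap)
  also have "\<dots> = (\<Sum>v\<in>X. card {e \<in> ?W. v \<in> e})"
    using fW by (simp add: card_filter_sum)
  also have "\<dots> = (\<Sum>v\<in>X. card {u \<in> X. {u, v} \<in> E})"
  proof (rule sum.cong[OF refl])
    fix v assume vX: "v \<in> X"
    have "bij_betw (\<lambda>u. {u, v}) {u \<in> X. {u, v} \<in> E} {e \<in> ?W. v \<in> e}"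
    proof (rule bij_betw_imageI)
      show "inj_on (\<lambda>u. {u, v}) {u \<in> X. {u, v} \<in> E}"
        by (rule inj_onI) (auto simp: doubleton_eq_iff)
      show "(\<lambda>u. {u, v}) ` {u \<in> X. {u, v} \<in> E} = {e \<in> ?W. v \<in> e}"
      proof
        show "(\<lambda>u. {u, v}) ` {u \<in> X. {u, v} \<in> E} \<subseteq> {e \<in> ?W. v \<in> e}"
          using vX by (auto simp: edges_within_def)
      next
        show "{e \<in> ?W. v \<in> e} \<subseteq> (\<lambda>u. {u, v}) ` {u \<in> X. {u, v} \<in> E}"
        proof
          fix e assume e: "e \<in> {e \<in> ?W. v \<in> e}"
          then have "card e = 2" "e \<subseteq> X" "e \<in> E" "v \<in> e"
            using assms(2) by (auto simp: edges_within_def)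
          then obtain a b where ab: "e = {a, b}" "a \<noteq> b" by (meson card_2_iff)
          then have "\<exists>u. e = {u, v}" using \<open>v \<in> e\<close> by auto
          then obtain u where "e = {u, v}" by blast
          then show "e \<in> (\<lambda>u. {u, v}) ` {u \<in> X. {u, v} \<in> E}"
            using \<open>e \<subseteq> X\<close> \<open>e \<in> E\<close> by auto
        qed
      qed
    qed
    then show "card {e \<in> ?W. v \<in> e} = card {u \<in> X. {u, v} \<in> E}"
      using bij_betw_same_card by metis
  qed
  finally show ?thesis by simp
qed

lemma own_count:
  assumes "simple_graph V E" "v \<in> V"
  shows "card {u \<in> closed_nbhd V E v. c u = c v} = Suc (card {u \<in> color_class V c (c v). {u, v} \<in> E})"
proof -
  have vn: "{v, v} \<notin> E" using assms unfolding simple_graph_def by auto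
  have "{u \<in> closed_nbhd V E v. c u = c v} = insert v {u \<in> color_class V c (c v). {u, v} \<in> E}"
    using assms by (auto simp: closed_nbhd_def color_class_def)
  moreover have "v \<notin> {u \<in> color_class V c (c v). {u, v} \<in> E}" using vn by auto
  moreover have "finite {u \<in> color_class V c (c v). {u, v} \<in> E}"
    using assms unfolding simple_graph_def color_class_def by auto
  ultimately show ?thesis by simp
qed

lemma other_count:
  assumes "v \<in> V" "j \<noteq> c v"
  shows "{u \<in> closed_nbhd V E v. c u = j} = {u \<in> color_class V c j. {u, v} \<in> E}"
  using assms by (auto simp: closed_nbhd_def color_class_def)

lemma key:
  assumes "simple_graph V E" "cnb_coloring V E k c" "i \<in> {1..k}" "j \<in> {1..k}" "i \<noteq> j"
  shows "2 * card (edges_within E (color_class V c i)) + card (color_class V c i)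
       = (\<Sum>v\<in>color_class V c i. card {u \<in> color_class V c j. {u, v} \<in> E})"
proof -
  let ?A = "color_class V c i"
  have fV: "finite V" "\<forall>e\<in>E. e \<subseteq> V \<and> card e = 2" using assms(1) by (auto simp: simple_graph_def)
  have AV: "?A \<subseteq> V" by (auto simp: color_class_def)
  have fA: "finite ?A" using fV AV finite_subset by blast
  have "2 * card (edges_within E ?A) + card ?A = (\<Sum>v\<in>?A. Suc (card {u \<in> ?A. {u, v} \<in> E}))"
  proof -
    have "(\<Sum>v\<in>?A. Suc (card {u \<in> ?A. {u, v} \<in> E})) = (\<Sum>v\<in>?A. card {u \<in> ?A. {u, v} \<in> E}) + (\<Sum>v\<in>?A. 1)"
      unfolding Suc_eq_plus1 by (rule sum.distrib)
    then show ?thesis using handshake[OF fV AV] by simp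
  qed
  also have "\<dots> = (\<Sum>v\<in>?A. card {u \<in> color_class V c j. {u, v} \<in> E})"
  proof (rule sum.cong[OF refl])
    fix v assume vA: "v \<in> ?A"
    then have vV: "v \<in> V" and cv: "c v = i" by (auto simp: color_class_def)
    have "card {u \<in> closed_nbhd V E v. c u = i} = card {u \<in> closed_nbhd V E v. c u = j}"
      using assms(2,3,4) vV unfolding cnb_coloring_def by blast
    then show "Suc (card {u \<in> ?A. {u, v} \<in> E}) = card {u \<in> color_class V c j. {u, v} \<in> E}"
      using own_count[OF assms(1) vV, of c] other_count[OF vV, of j c E] cv assms(5) by simp
  qed
  finally show ?thesis .
qed

theorem corollary2p9:
  fixes V :: "'a set" and E :: "'a set set" and k :: nat and c :: "'a \<Rightarrow> nat" and i j :: nat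
  assumes "k \<ge> 2"
    and "simple_graph V E"
    and "cnb_coloring V E k c"
    and "i \<in> {1..k}" and "j \<in> {1..k}"
    and "card (color_class V c i) = card (color_class V c j)"
  shows "card (edges_within E (color_class V c i)) = card (edges_within E (color_class V c j))"
proof (cases "i = j")
  case True then show ?thesis by simp
next
  case False
  have fin: "finite (color_class V c i)" "finite (color_class V c j)"
    using assms(2) by (auto simp: simple_graph_def color_class_def)
  have k1: "2 * card (edges_within E (color_class V c i)) + card (color_class V c i)
       = (\<Sum>v\<in>color_class V c i. card {u \<in> color_class V c j. {u, v} \<in> E})"
    by (rule key[OF assms(2,3,4,5) False])
  have k2: "2 * card (edges_within E (color_class V c j)) + card (color_class V c j)
       = (\<Sum>v\<in>color_class V c j. card {u \<in> color_class V c i. {u, v} \<in> E})"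
    using key[OF assms(2,3,5,4)] False by simp
  have "(\<Sum>v\<in>color_class V c i. card {u \<in> color_class V c j. {u, v} \<in> E})
      = (\<Sum>v\<in>color_class V c j. card {u \<in> color_class V c i. {v, u} \<in> E})"
    by (rule cross_count[OF fin])
  also have "\<dots> = (\<Sum>v\<in>color_class V c j. card {u \<in> color_class V c i. {u, v} \<in> E})"
    by (simp add: insert_commute)
  finally show ?thesis using k1 k2 assms(6) by simp
qed

end
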